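(* Let $(R,\Lambda,S)$ be a generalised Renner–Coxeter system with length function $\ell$, let $r\in R$ and let $(w_1,e,w_2)$ be the normal decomposition of $r$. Then $\ell(r)=\ell(w_1)+\ell(w_2)$.
   Context: For a monoid $R$, $E(R)$ is its set of idempotents, $G(R)$ its unit group. $R$ is factorisable if $R=E(R)G(R)=G(R)E(R)$ and idempotents commute; then $E(R)$ is a semilattice ($e\le f\iff ef=fe=e$) on which $G(R)$ acts by conjugation. For $e\in E(R)$, $W(e)=\{w\in G(R)\mid we=ew\}$, $W_\star(e)=\{w\mid we=ew=e\}$. For a Coxeter system $(W,S)$, $W_I$ is the subgroup generated by $I\subseteq S$. A generalised Renner–Coxeter system is a triple $(R,\Lambda,S)$ with: (ECS1) $R$ factorisable; (ECS2) $\Lambda\subseteq E(R)$ contains exactly one element of each $G(R)$-orbit and is closed under multiplication; (ECS3) $(G(R),S)$ is a Coxeter system; (ECS4) for $e_1\le e_2$ in $E(R)$ there are $w\in G(R)$, $f_1\le f_2$ in $\Lambda$ with $wf_iw^{-1}=e_i$; (ECS5) for $e\in\Lambda$, $W(e)$, $W_\star(e)$ are of the form $W_I$; (ECS6) with $\lambda^\star(e)=\{s\in S\mid se=es\ne e\}$, $e\le f$ in $\Lambda$ implies $\lambda^\star(e)\subseteq\lambda^\star(f)$. $\Lambda_\circ=\Lambda\setminus\{1\}$. The length $\ell(x)$ of $x\in R$ is the minimal number of letters from $S$ in a word over $S\cup\Lambda_\circ$ representing $x$. The normal decomposition of $r$ is the unique triple $(w_1,e,w_2)$ with $e\in\Lambda$,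 $w_1$ of minimal Coxeter length in $w_1W_\star(e)$, $w_2$ of minimal Coxeter length in $W(e)w_2$, and $r=w_1ew_2$. *)

theory Defs
  imports Main
begin

text \<open>The monoid R is modelled as a type 'a of class monoid_mult (the whole type is R).\<close>

definition idems :: "'a::monoid_mult set" where
  "idems = {e. e * e = e}"

definition units :: "'a::monoid_mult set" where
  "units = {w. \<exists>v. w * v = 1 \<and> v * w = 1}"

definition idem_le :: "'a::monoid_mult \<Rightarrow> 'a \<Rightarrow> bool" where
  "idem_le e f \<longleftrightarrow> e * f = e \<and> f * e = e"

definition factorisable :: "'a::monoid_mult itself \<Rightarrow> bool" where
  "factorisable _ \<longleftrightarrow>
     (\<forall>r::'a. \<exists>e\<in>idems. \<exists>g\<in>units. r = e * g) \<and>
     (\<forall>r::'a. \<exists>e\<in>idems. \<exists>g\<in>units. r = g * e) \<and>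
     (\<forall>e\<in>(idems::'a set). \<forall>f\<in>idems. e * f = f * e)"

definition unit_conj :: "'a::monoid_mult \<Rightarrow> 'a \<Rightarrow> 'a \<Rightarrow> bool" where
  "unit_conj g f e \<longleftrightarrow> (\<exists>h. g * h = 1 \<and> h * g = 1 \<and> g * f * h = e)"

text \<open>Congruence on words over S generated by the Coxeter relations
  ss = 1 and (st)^{m(s,t)} = 1 (m s t = 0 encodes m(s,t) = infinity).\<close>
inductive cox_equiv :: "'a set \<Rightarrow> ('a \<Rightarrow> 'a \<Rightarrow> nat) \<Rightarrow> 'a list \<Rightarrow> 'a list \<Rightarrow> bool"
  for S m where
  refl: "u \<in> lists S \<Longrightarrow> cox_equiv S m u u"
| sym: "cox_equiv S m u v \<Longrightarrow> cox_equiv S m v u"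
| trans: "cox_equiv S m u v \<Longrightarrow> cox_equiv S m v w \<Longrightarrow> cox_equiv S m u w"
| braid: "u \<in> lists S \<Longrightarrow> v \<in> lists S \<Longrightarrow> s \<in> S \<Longrightarrow> t \<in> S \<Longrightarrow> m s t \<noteq> 0 \<Longrightarrow>
          cox_equiv S m (u @ concat (replicate (m s t) [s, t]) @ v) (u @ v)"

definition coxeter_system :: "'a::monoid_mult set \<Rightarrow> bool" where
  "coxeter_system S \<longleftrightarrow>
     S \<subseteq> units \<and> (\<forall>s\<in>S. s \<noteq> 1 \<and> s * s = 1) \<and>
     (\<forall>g\<in>units. \<exists>u\<in>lists S. prod_list u = g) \<and>
     (\<exists>m::'a \<Rightarrow> 'a \<Rightarrow> nat.
        (\<forall>s t. m s t = m t s) \<and> (\<forall>s. m s s = 1) \<and>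
        (\<forall>s\<in>S. \<forall>t\<in>S. s \<noteq> t \<longrightarrow> m s t \<noteq> 1) \<and>
        (\<forall>u\<in>lists S. \<forall>v\<in>lists S. prod_list u = prod_list v \<longleftrightarrow> cox_equiv S m u v))"

text \<open>Standard parabolic subgroup W_I (generated by I; as elements of I are involutions,
  the products of words over I form exactly the generated subgroup).\<close>
definition parabolic :: "'a::monoid_mult set \<Rightarrow> 'a set" where
  "parabolic I = {prod_list u | u. u \<in> lists I}"

definition W_cent :: "'a::monoid_mult \<Rightarrow> 'a set" where
  "W_cent e = {w \<in> units. w * e = e * w}"

definition W_star :: "'a::monoid_mult \<Rightarrow> 'a set" where
  "W_star e = {w \<in> units. w * e = e \<and> e * w = e}"

definition lambda_star :: "'a::monoid_mult set \<Rightarrow> 'a \<Rightarrow> 'a set" where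
  "lambda_star S e = {s \<in> S. s * e = e * s \<and> s * e \<noteq> e}"

definition gen_renner_coxeter :: "'a::monoid_mult set \<Rightarrow> 'a set \<Rightarrow> bool" where
  "gen_renner_coxeter \<Lambda> S \<longleftrightarrow>
     factorisable TYPE('a) \<and>
     \<Lambda> \<subseteq> idems \<and>
     (\<forall>e\<in>idems. \<exists>f\<in>\<Lambda>. \<exists>g\<in>units. unit_conj g f e) \<and>
     (\<forall>f1\<in>\<Lambda>. \<forall>f2\<in>\<Lambda>. (\<exists>g\<in>units. unit_conj g f1 f2) \<longrightarrow> f1 = f2) \<and>
     (\<forall>a\<in>\<Lambda>. \<forall>b\<in>\<Lambda>. a * b \<in> \<Lambda>) \<and>
     coxeter_system S \<and>
     (\<forall>e1\<in>idems. \<forall>e2\<in>idems. idem_le e1 e2 \<longrightarrow>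
        (\<exists>w\<in>units. \<exists>f1\<in>\<Lambda>. \<exists>f2\<in>\<Lambda>. idem_le f1 f2 \<and> unit_conj w f1 e1 \<and> unit_conj w f2 e2)) \<and>
     (\<forall>e\<in>\<Lambda>. (\<exists>I\<subseteq>S. W_cent e = parabolic I) \<and> (\<exists>J\<subseteq>S. W_star e = parabolic J)) \<and>
     (\<forall>e\<in>\<Lambda>. \<forall>f\<in>\<Lambda>. idem_le e f \<longrightarrow> lambda_star S e \<subseteq> lambda_star S f)"

definition cox_len :: "'a::monoid_mult set \<Rightarrow> 'a \<Rightarrow> nat" where
  "cox_len S w = (LEAST n. \<exists>u\<in>lists S. prod_list u = w \<and> length u = n)"

definition rlen :: "'a::monoid_mult set \<Rightarrow> 'a set \<Rightarrow> 'a \<Rightarrow> nat" where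
  "rlen \<Lambda> S x = (LEAST n. \<exists>u\<in>lists (S \<union> (\<Lambda> - {1})).
      prod_list u = x \<and> length (filter (\<lambda>a. a \<in> S) u) = n)"

definition normal_decomp :: "'a::monoid_mult set \<Rightarrow> 'a set \<Rightarrow> 'a \<Rightarrow> 'a \<Rightarrow> 'a \<Rightarrow> 'a \<Rightarrow> bool" where
  "normal_decomp \<Lambda> S r w1 e w2 \<longleftrightarrow>
     e \<in> \<Lambda> \<and> w1 \<in> units \<and> w2 \<in> units \<and> r = w1 * e * w2 \<and>
     (\<forall>u\<in>W_star e. cox_len S w1 \<le> cox_len S (w1 * u)) \<and>
     (\<forall>u\<in>W_cent e. cox_len S w2 \<le> cox_len S (u * w2))"

end

theory Submission imports Defs "HOL-Library.Sublist" begin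

definition uinv :: "'a::monoid_mult \<Rightarrow> 'a" where
  "uinv w = (SOME v. w * v = 1 \<and> v * w = 1)"

lemma uinv: assumes "w \<in> units" shows "w * uinv w = 1" "uinv w * w = 1"
proof -
  from assms obtain v where "w * v = 1 \<and> v * w = 1" by (auto simp: units_def)
  hence "w * uinv w = 1 \<and> uinv w * w = 1" unfolding uinv_def by (rule someI)
  thus "w * uinv w = 1" "uinv w * w = 1" by auto
qed

lemma uinv_units: "w \<in> units \<Longrightarrow> uinv w \<in> units"
  using uinv[of w] by (auto simp: units_def)

lemma units_mult: "a \<in> units \<Longrightarrow> b \<in> units \<Longrightarrow> a * b \<in> units"
proof -
  assume a: "a \<in> units" and b: "b \<in> units"
  have "a * b * (uinv b * uinv a) = 1"
    by (metis a b mult.assoc mult_1_left uinv(1))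
  moreover have "(uinv b * uinv a) * (a * b) = 1"
    by (metis a b mult.assoc mult_1_left uinv(2))
  ultimately show ?thesis by (auto simp: units_def)
qed

lemma units_one[simp]: "1 \<in> units" by (auto simp: units_def)

lemma uinv_unique: "w \<in> units \<Longrightarrow> w * v = 1 \<Longrightarrow> v = uinv w"
  by (metis mult.assoc mult_1_left mult_1_right uinv(2))

lemma uinv_left: "g \<in> units \<Longrightarrow> uinv g * (g * x) = x"
  by (simp add: mult.assoc[symmetric] uinv)
lemma uinv_right: "g \<in> units \<Longrightarrow> g * (uinv g * x) = x"
  by (simp add: mult.assoc[symmetric] uinv)

fun refl :: "'a::monoid_mult list \<Rightarrow> 'a list" where
  "refl [] = []"
| "refl (a # w) = a # map (\<lambda>x. a * x * a) (refl w)"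

lemma length_refl[simp]: "length (refl w) = length w"
  by (induct w) auto

lemma refl_append: "refl (u @ v) = refl u @ map (\<lambda>x. prod_list u * x * prod_list (rev u)) (refl v)"
  by (induct u) (auto simp: mult.assoc)

definition oddset :: "'a::monoid_mult list \<Rightarrow> 'a set" where
  "oddset w = {t. odd (count_list (refl w) t)}"

lemma prod_alt: "prod_list (concat (replicate k [s, t])) = (s * t) ^ (k::nat)" for s t :: "'a::monoid_mult"
  by (induct k) (auto simp: mult.assoc)

lemma s_ts: "s * (t * s) ^ k = (s * t) ^ k * (s::'a::monoid_mult)"
  by (induct k) (auto simp: mult.assoc)

lemma alt_snoc: "concat (replicate k [s, t]) @ [s, t] = s # t # concat (replicate k [s, t])"
  by (induct k) auto

lemma refl_alt: "refl (concat (replicate k [s, t])) = map (\<lambda>i. (s * t) ^ i * s) [0..<2*k]" for s t :: "'a::monoid_mult"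
proof (induct k)
  case (Suc k)
  have e: "concat (replicate (Suc k) [s, t]) = concat (replicate k [s, t]) @ [s, t]"
    by (simp add: alt_snoc)
  have r: "rev (concat (replicate k [s, t])) = concat (replicate k [t, s])"
    by (induct k) (auto simp: alt_snoc)
  have p1: "(s * t) ^ k * s * (t * s) ^ k = (s * t) ^ (2*k) * s"
  proof -
    have "(s * t) ^ k * s * (t * s) ^ k = (s * t) ^ k * ((s * t) ^ k * s)"
      by (simp add: mult.assoc s_ts)
    also have "\<dots> = (s * t) ^ (k + k) * s" by (simp only: power_add mult.assoc)
    finally show ?thesis by (simp add: mult_2)
  qed
  have p2: "(s * t) ^ k * (s * t * s) * (t * s) ^ k = (s * t) ^ (Suc (2*k)) * s"
  proof -
    have "(s * t) ^ k * (s * t * s) * (t * s) ^ k = (s * t) ^ k * (s * t) * (s * (t * s) ^ k)"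
      by (simp add: mult.assoc)
    also have "\<dots> = (s * t) ^ k * (s * t) * ((s * t) ^ k * s)" by (simp add: s_ts)
    also have "\<dots> = ((s * t) ^ k * (s * t) * (s * t) ^ k) * s" by (simp add: mult.assoc)
    also have "(s * t) ^ k * (s * t) * (s * t) ^ k = (s * t) ^ (Suc (2*k))"
      by (simp only: power_Suc2[symmetric] power_add[symmetric] mult_2 add_Suc)
    finally show ?thesis .
  qed
  have u: "[0..<2 * Suc k] = [0..<2*k] @ [2*k, Suc (2*k)]" by simp
  have "refl (concat (replicate (Suc k) [s, t])) = refl (concat (replicate k [s, t])) @
      [(s*t)^k * s * (t*s)^k, (s*t)^k * (s*t*s) * (t*s)^k]"
    by (simp only: e refl_append) (simp add: prod_alt r)
  thus ?case unfolding Suc u p1 p2 by simp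
qed simp

lemma refl_mem: "x \<in> set (refl w) \<Longrightarrow> \<exists>\<beta> b \<gamma>. w = \<beta> @ b # \<gamma> \<and> x = prod_list \<beta> * b * prod_list (rev \<beta>)"
proof (induct w arbitrary: x)
  case (Cons c w)
  show ?case
  proof (cases "x = c")
    case True thus ?thesis by (intro exI[of _ "[]"]) auto
  next
    case False
    then obtain y where y: "y \<in> set (refl w)" "x = c * y * c" using Cons.prems by auto
    from Cons.hyps[OF y(1)] obtain \<beta> b \<gamma> where "w = \<beta> @ b # \<gamma>" "y = prod_list \<beta> * b * prod_list (rev \<beta>)"
      by blast
    thus ?thesis using y by (intro exI[of _ "c # \<beta>"]) (auto simp: mult.assoc)
  qed
qed simp

lemma count_distinct: "distinct xs \<Longrightarrow> count_list xs x = (if x \<in> set xs then 1 else 0)"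
  by (induct xs) auto

locale coxm =
  fixes S :: "'a::monoid_mult set" and m :: "'a \<Rightarrow> 'a \<Rightarrow> nat"
  assumes S_units: "S \<subseteq> units"
    and S_inv: "\<And>s. s \<in> S \<Longrightarrow> s * s = 1"
    and S_gen: "\<And>g. g \<in> units \<Longrightarrow> \<exists>u\<in>lists S. prod_list u = g"
    and S_pres: "\<And>u v. u \<in> lists S \<Longrightarrow> v \<in> lists S \<Longrightarrow> prod_list u = prod_list v \<longleftrightarrow> cox_equiv S m u v"
begin

lemma prod_units: "u \<in> lists S \<Longrightarrow> prod_list u \<in> units"
  by (induct u) (use S_units units_mult in auto)

lemma prod_rev_inv: "u \<in> lists S \<Longrightarrow> prod_list u * prod_list (rev u) = 1"
proof (induct u)
  case (Cons a u)
  hence "a * (prod_list u * prod_list (rev u)) * a = 1" by (simp add: S_inv)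
  thus ?case by (simp add: mult.assoc)
qed simp

lemma prod_rev_inv2: "u \<in> lists S \<Longrightarrow> prod_list (rev u) * prod_list u = 1"
  using prod_rev_inv[of "rev u"] by (simp add: in_lists_conv_set)

lemma alt_lists: "s \<in> S \<Longrightarrow> t \<in> S \<Longrightarrow> concat (replicate k [s, t]) \<in> lists S"
  by (induct k) auto

lemma braid_one: assumes "s \<in> S" "t \<in> S" shows "(s * t) ^ m s t = 1"
proof (cases "m s t = 0")
  case False
  have "cox_equiv S m ([] @ concat (replicate (m s t) [s, t]) @ []) ([] @ [])"
    by (rule cox_equiv.braid) (use assms False in auto)
  hence "prod_list (concat (replicate (m s t) [s, t])) = prod_list ([]::'a list)"
    using S_pres[of "concat (replicate (m s t) [s, t])" "[]"] assms alt_lists by auto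
  thus ?thesis by (simp add: prod_alt)
qed simp

lemma refl_alt_double: assumes "s \<in> S" "t \<in> S"
  shows "\<exists>L. refl (concat (replicate (m s t) [s, t])) = L @ L"
proof -
  let ?f = "\<lambda>i. (s * t) ^ i * s"
  let ?n = "m s t"
  have 1: "[0..<2 * ?n] = [0..<?n] @ [?n..<?n + ?n]" unfolding mult_2 by (rule upt_add_eq_append) simp
  have 2: "[?n..<?n + ?n] = map (\<lambda>i. i + ?n) [0..<?n]" by (rule map_add_upt[symmetric])
  have 3: "?f (i + ?n) = ?f i" for i
    by (simp add: power_add braid_one[OF assms])
  show ?thesis unfolding refl_alt 1 2
    by (rule exI[of _ "map ?f [0..<?n]"]) (simp add: 3)
qed

lemma oddset_equiv: "cox_equiv S m u v \<Longrightarrow> oddset u = oddset v"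
proof (induct rule: cox_equiv.induct)
  case (braid u v s t)
  let ?B = "concat (replicate (m s t) [s, t])"
  have Bl: "?B \<in> lists S" using braid alt_lists by auto
  have pB: "prod_list ?B = 1" using braid_one[OF braid(3,4)] by (simp add: prod_alt)
  have pBr: "prod_list (rev ?B) = 1" using prod_rev_inv[OF Bl] pB by simp
  obtain L where L: "refl ?B = L @ L" using refl_alt_double[OF braid(3,4)] by blast
  let ?c = "\<lambda>x. prod_list u * x * prod_list (rev u)"
  have "refl (u @ ?B @ v) = refl u @ map ?c (L @ L) @ map ?c (refl v)"
    unfolding refl_append[of u] refl_append[of ?B] L
    by (simp add: pB pBr)
  moreover have "refl (u @ v) = refl u @ map ?c (refl v)" by (simp add: refl_append)
  ultimately show ?case unfolding oddset_def by auto
qed auto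

lemma oddset_prod: "u \<in> lists S \<Longrightarrow> v \<in> lists S \<Longrightarrow> prod_list u = prod_list v \<Longrightarrow> oddset u = oddset v"
  using S_pres oddset_equiv by blast


lemma red_word: "w \<in> units \<Longrightarrow> \<exists>u\<in>lists S. prod_list u = w \<and> length u = cox_len S w"
proof -
  assume "w \<in> units"
  then obtain u where "u \<in> lists S" "prod_list u = w" using S_gen by blast
  hence "\<exists>n. \<exists>u\<in>lists S. prod_list u = w \<and> length u = n" by blast
  from LeastI_ex[OF this] show ?thesis unfolding cox_len_def by blast
qed

lemma len_le: "u \<in> lists S \<Longrightarrow> cox_len S (prod_list u) \<le> length u"
  unfolding cox_len_def by (rule Least_le) blast

lemma distinct_reduced: assumes "w \<in> lists S" "distinct (refl w)"
  shows "length w \<le> cox_len S (prod_list w)"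
proof -
  obtain \<sigma> where \<sigma>: "\<sigma> \<in> lists S" "prod_list \<sigma> = prod_list w" "length \<sigma> = cox_len S (prod_list w)"
    using red_word[OF prod_units[OF assms(1)]] by blast
  have o: "oddset \<sigma> = oddset w" by (rule oddset_prod) (use \<sigma> assms in auto)
  have ow: "oddset w = set (refl w)" unfolding oddset_def using count_distinct[OF assms(2)] by auto
  have os: "oddset \<sigma> \<subseteq> set (refl \<sigma>)"
  proof
    fix t assume "t \<in> oddset \<sigma>"
    hence "count_list (refl \<sigma>) t \<noteq> 0" unfolding oddset_def by (metis mem_Collect_eq even_zero)
    thus "t \<in> set (refl \<sigma>)" using count_list_0_iff by metis
  qed
  have "length w = card (set (refl w))" using distinct_card[OF assms(2)] by simp
  also have "\<dots> = card (oddset \<sigma>)" using o ow by simp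
  also have "\<dots> \<le> card (set (refl \<sigma>))" using os by (intro card_mono) auto
  also have "\<dots> \<le> length \<sigma>" using card_length[of "refl \<sigma>"] by simp
  finally show ?thesis using \<sigma> by simp
qed

lemma del: "w \<in> lists S \<Longrightarrow> \<not> distinct (refl w) \<Longrightarrow>
  \<exists>\<alpha> a \<beta> b \<gamma>. w = \<alpha> @ a # \<beta> @ b # \<gamma> \<and> prod_list (\<alpha> @ \<beta> @ \<gamma>) = prod_list w"
proof (induct w)
  case (Cons c w)
  have c: "c \<in> S" "w \<in> lists S" using Cons.prems by auto
  have cc: "c * c = 1" using S_inv c by auto
  have inj: "inj_on (\<lambda>x. c * x * c) X" for X
  proof (rule inj_onI)
    fix x y assume "c * x * c = c * y * c"
    hence "c * (c * x * c) * c = c * (c * y * c) * c" by simp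
    thus "x = y" by (simp add: mult.assoc[symmetric] cc) (simp add: mult.assoc cc)
  qed
  have "c \<in> (\<lambda>x. c * x * c) ` set (refl w) \<or> \<not> distinct (refl w)"
    using Cons.prems(2) inj by (auto simp: distinct_map)
  thus ?case
  proof
    assume "\<not> distinct (refl w)"
    from Cons.hyps[OF c(2) this] obtain \<alpha> a \<beta> b \<gamma> where
      "w = \<alpha> @ a # \<beta> @ b # \<gamma>" "prod_list (\<alpha> @ \<beta> @ \<gamma>) = prod_list w" by blast
    thus ?case by (intro exI[of _ "c # \<alpha>"] exI[of _ a] exI[of _ \<beta>] exI[of _ b] exI[of _ \<gamma>]) auto
  next
    assume "c \<in> (\<lambda>x. c * x * c) ` set (refl w)"
    then obtain x where x: "x \<in> set (refl w)" "c = c * x * c" by auto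
    have "x = c * (c * x * c) * c" by (simp add: mult.assoc[symmetric] cc) (simp add: mult.assoc cc)
    also have "\<dots> = c * c * c" using x(2)[symmetric] by simp
    also have "\<dots> = c" by (simp add: cc)
    finally have "x = c" .
    with x refl_mem obtain \<beta> b \<gamma> where bg: "w = \<beta> @ b # \<gamma>" "c = prod_list \<beta> * b * prod_list (rev \<beta>)"
      by blast
    have bl: "\<beta> \<in> lists S" "b \<in> S" using bg c by auto
    have "prod_list (c # w) = prod_list \<beta> * b * (prod_list (rev \<beta>) * prod_list \<beta>) * b * prod_list \<gamma>"
      using bg by (simp add: mult.assoc)
    also have "\<dots> = prod_list (\<beta> @ \<gamma>)" using prod_rev_inv2[OF bl(1)] S_inv[OF bl(2)]
      by (simp add: mult.assoc)
    finally have "prod_list (c # w) = prod_list (\<beta> @ \<gamma>)" .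
    thus ?case using bg(1)
      by (intro exI[of _ "[]"] exI[of _ c] exI[of _ \<beta>] exI[of _ b] exI[of _ \<gamma>]) simp
  qed
qed simp

lemma red_subseq: "w \<in> lists S \<Longrightarrow>
  \<exists>w'. subseq w' w \<and> prod_list w' = prod_list w \<and> length w' = cox_len S (prod_list w)"
proof (induct "length w" arbitrary: w rule: less_induct)
  case less
  show ?case
  proof (cases "distinct (refl w)")
    case True
    thus ?thesis using distinct_reduced[OF less.prems True] len_le[OF less.prems]
      by (intro exI[of _ w]) auto
  next
    case False
    from del[OF less.prems False] obtain \<alpha> a \<beta> b \<gamma> where
      d: "w = \<alpha> @ a # \<beta> @ b # \<gamma>" "prod_list (\<alpha> @ \<beta> @ \<gamma>) = prod_list w" by blast
    have l: "\<alpha> @ \<beta> @ \<gamma> \<in> lists S" using less.prems d by auto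
    have "length (\<alpha> @ \<beta> @ \<gamma>) < length w" using d by simp
    from less.hyps[OF this l] obtain w' where
      w': "subseq w' (\<alpha> @ \<beta> @ \<gamma>)" "prod_list w' = prod_list (\<alpha> @ \<beta> @ \<gamma>)"
        "length w' = cox_len S (prod_list (\<alpha> @ \<beta> @ \<gamma>))" by blast
    have s1: "subseq (\<beta> @ \<gamma>) (\<beta> @ b # \<gamma>)" by (rule list_emb_append_mono) auto
    have s2: "subseq (\<beta> @ \<gamma>) (a # \<beta> @ b # \<gamma>)" using s1 by (rule list_emb_Cons)
    have "subseq (\<alpha> @ \<beta> @ \<gamma>) w" unfolding d(1) by (rule list_emb_append_mono) (auto simp: s2)
    thus ?thesis using w' d by (intro exI[of _ w']) (auto intro: subseq_order.order_trans)
  qed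
qed


lemma subadd: "p \<in> units \<Longrightarrow> q \<in> units \<Longrightarrow> cox_len S (p * q) \<le> cox_len S p + cox_len S q"
proof -
  assume p: "p \<in> units" and q: "q \<in> units"
  obtain u where u: "u \<in> lists S" "prod_list u = p" "length u = cox_len S p" using red_word[OF p] by blast
  obtain v where v: "v \<in> lists S" "prod_list v = q" "length v = cox_len S q" using red_word[OF q] by blast
  have "cox_len S (prod_list (u @ v)) \<le> length (u @ v)" using u v by (intro len_le) auto
  thus ?thesis using u v by simp
qed

lemma uinv_prod: "u \<in> lists S \<Longrightarrow> uinv (prod_list u) = prod_list (rev u)"
  using uinv_unique[OF prod_units prod_rev_inv] by metis

lemma parabolic_units: "I \<subseteq> S \<Longrightarrow> x \<in> parabolic I \<Longrightarrow> x \<in> units"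
  unfolding parabolic_def using prod_units by (auto dest: lists_mono[THEN subsetD, rotated])

lemma parabolic_uinv: "I \<subseteq> S \<Longrightarrow> x \<in> parabolic I \<Longrightarrow> uinv x \<in> parabolic I"
proof -
  assume I: "I \<subseteq> S" and "x \<in> parabolic I"
  then obtain u where u: "u \<in> lists I" "x = prod_list u" unfolding parabolic_def by blast
  hence "u \<in> lists S" using I by auto
  hence "uinv x = prod_list (rev u)" using uinv_prod u by simp
  thus ?thesis using u unfolding parabolic_def by (auto simp: in_lists_conv_set)
qed

lemma parabolic_mult: "x \<in> parabolic I \<Longrightarrow> y \<in> parabolic I \<Longrightarrow> x * y \<in> parabolic I"
proof -
  assume "x \<in> parabolic I" "y \<in> parabolic I"
  then obtain u v where "u \<in> lists I" "v \<in> lists I" "x = prod_list u" "y = prod_list v"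
    unfolding parabolic_def by blast
  hence "u @ v \<in> lists I" "x * y = prod_list (u @ v)" by auto
  thus ?thesis unfolding parabolic_def by blast
qed

lemma parabolic_prod: "u \<in> lists I \<Longrightarrow> prod_list u \<in> parabolic I"
  unfolding parabolic_def by blast

lemma coset_add: assumes I: "I \<subseteq> S" and c: "c \<in> parabolic I" and w: "w \<in> units"
  and min: "\<forall>u\<in>parabolic I. cox_len S w \<le> cox_len S (u * w)"
  shows "cox_len S c + cox_len S w \<le> cox_len S (c * w)"
proof -
  obtain \<gamma>0 where g0: "\<gamma>0 \<in> lists I" "c = prod_list \<gamma>0" using c unfolding parabolic_def by blast
  have g0S: "\<gamma>0 \<in> lists S" using g0 I by auto
  obtain \<gamma> where g: "subseq \<gamma> \<gamma>0" "prod_list \<gamma> = c" "length \<gamma> = cox_len S c"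
    using red_subseq[OF g0S] g0 by auto
  have gI: "\<gamma> \<in> lists I" using g(1) g0(1) by (auto dest: list_emb_set)
  have gS: "\<gamma> \<in> lists S" using gI I by auto
  obtain \<delta> where d: "\<delta> \<in> lists S" "prod_list \<delta> = w" "length \<delta> = cox_len S w" using red_word[OF w] by blast
  have gdS: "\<gamma> @ \<delta> \<in> lists S" using gS d by auto
  obtain \<omega> where o: "subseq \<omega> (\<gamma> @ \<delta>)" "prod_list \<omega> = c * w" "length \<omega> = cox_len S (c * w)"
    using red_subseq[OF gdS] g d by auto
  then obtain \<gamma>' \<delta>' where sp: "\<omega> = \<gamma>' @ \<delta>'" "subseq \<gamma>' \<gamma>" "subseq \<delta>' \<delta>"
    by (auto elim: subseq_appendE)
  have g'I: "\<gamma>' \<in> lists I" using sp gI by (auto dest: list_emb_set)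
  have g'S: "\<gamma>' \<in> lists S" using g'I I by auto
  have d'S: "\<delta>' \<in> lists S" using sp d by (auto dest: list_emb_set)
  have pd: "prod_list \<delta>' = prod_list (rev \<gamma>' @ \<gamma>) * w"
  proof -
    have "prod_list (rev \<gamma>' @ \<gamma>) * w = prod_list (rev \<gamma>') * (c * w)" using g by (simp add: mult.assoc)
    also have "\<dots> = prod_list (rev \<gamma>') * prod_list \<gamma>' * prod_list \<delta>'" using o sp by (simp add: mult.assoc)
    also have "\<dots> = prod_list \<delta>'" using prod_rev_inv2[OF g'S] by simp
    finally show ?thesis by simp
  qed
  have "rev \<gamma>' @ \<gamma> \<in> lists I" using g'I gI by (auto simp: in_lists_conv_set)
  hence "cox_len S w \<le> cox_len S (prod_list \<delta>')" using min pd parabolic_prod by metis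
  also have "\<dots> \<le> length \<delta>'" by (rule len_le[OF d'S])
  finally have "length \<delta> \<le> length \<delta>'" using d by simp
  hence "\<delta>' = \<delta>" using sp(3) list_emb_length[OF sp(3)] subseq_same_length by (metis le_antisym)
  hence "prod_list \<gamma>' * w = c * w" using o sp d by simp
  hence "prod_list \<gamma>' * w * uinv w = c * w * uinv w" by simp
  hence "prod_list \<gamma>' = c" using uinv(1)[OF w] by (simp add: mult.assoc)
  hence "cox_len S c \<le> length \<gamma>'" using len_le[OF g'S] by simp
  thus ?thesis using o sp d \<open>\<delta>' = \<delta>\<close> by simp
qed

end

lemma conj_uinv: "g \<in> units \<Longrightarrow> unit_conj g f e \<longleftrightarrow> g * f * uinv g = e"
  unfolding unit_conj_def using uinv uinv_unique by metis

lemma uinv_mult: "a \<in> units \<Longrightarrow> b \<in> units \<Longrightarrow> uinv (a * b) = uinv b * uinv a"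
proof -
  assume a: "a \<in> units" and b: "b \<in> units"
  have "a * b * (uinv b * uinv a) = 1" by (metis a b mult.assoc mult_1_left uinv(1))
  thus ?thesis using uinv_unique[OF units_mult[OF a b]] by metis
qed

lemma uinv_uinv: "a \<in> units \<Longrightarrow> uinv (uinv a) = a"
  using uinv_unique[OF uinv_units, of a a] uinv(2) by metis

locale grc = coxm S m for \<Lambda> :: "'a::monoid_mult set" and S m +
  assumes idem_comm: "\<And>(e::'a) f. e \<in> idems \<Longrightarrow> f \<in> idems \<Longrightarrow> e * f = f * e"
    and Lsub: "\<Lambda> \<subseteq> idems"
    and Lrep: "\<And>e. e \<in> idems \<Longrightarrow> \<exists>f\<in>\<Lambda>. \<exists>g\<in>units. unit_conj g f e"
    and Luniq: "\<And>f1 f2 g. f1 \<in> \<Lambda> \<Longrightarrow> f2 \<in> \<Lambda> \<Longrightarrow> g \<in> units \<Longrightarrow> unit_conj g f1 f2 \<Longrightarrow> f1 = f2"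
    and Lmult: "\<And>a b. a \<in> \<Lambda> \<Longrightarrow> b \<in> \<Lambda> \<Longrightarrow> a * b \<in> \<Lambda>"
    and ECS4: "\<And>e1 e2. e1 \<in> idems \<Longrightarrow> e2 \<in> idems \<Longrightarrow> idem_le e1 e2 \<Longrightarrow>
        (\<exists>w\<in>units. \<exists>f1\<in>\<Lambda>. \<exists>f2\<in>\<Lambda>. idem_le f1 f2 \<and> unit_conj w f1 e1 \<and> unit_conj w f2 e2)"
    and ECS5: "\<And>e. e \<in> \<Lambda> \<Longrightarrow> (\<exists>I\<subseteq>S. W_cent e = parabolic I)"
begin

lemma idem_mult: "(e::'a) \<in> idems \<Longrightarrow> f \<in> idems \<Longrightarrow> e * f \<in> idems"
proof -
  assume e: "e \<in> idems" and f: "f \<in> idems"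
  have "e * f * (e * f) = e * (f * e) * f" by (simp add: mult.assoc)
  also have "\<dots> = e * e * f * f" using idem_comm[OF e f] by (simp add: mult.assoc)
  also have "\<dots> = e * f" using e f by (simp add: idems_def mult.assoc)
  finally show ?thesis by (simp add: idems_def)
qed

lemma conj_idem: "(g::'a) \<in> units \<Longrightarrow> e \<in> idems \<Longrightarrow> g * e * uinv g \<in> idems"
proof -
  assume g: "g \<in> units" and e: "e \<in> idems"
  have ee: "e * (e * x) = e * x" for x using e by (simp add: idems_def mult.assoc[symmetric])
  show ?thesis using uinv(2)[OF g] e unfolding idems_def mem_Collect_eq
    by (simp add: mult.assoc uinv_left[OF g] ee)
qed

lemma unit_idem: "(e::'a) \<in> idems \<Longrightarrow> e \<in> units \<Longrightarrow> e = 1"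
proof -
  assume e: "e \<in> idems" "e \<in> units"
  have "e = e * e * uinv e" using uinv(1)[OF e(2)] by (simp add: mult.assoc)
  also have "\<dots> = 1" using e uinv(1)[OF e(2)] by (simp add: idems_def)
  finally show ?thesis .
qed

lemma one_L: "1 \<in> \<Lambda>"
proof -
  obtain f g where f: "f \<in> \<Lambda>" "g \<in> units" "unit_conj g f 1" using Lrep[of 1] by (auto simp: idems_def)
  hence "g * f * uinv g = 1" using conj_uinv by blast
  hence "uinv g * (g * f * uinv g) * g = uinv g * g" by simp
  hence "f = 1" using uinv[OF f(2)] by (simp add: mult.assoc uinv_left[OF f(2)])
  thus ?thesis using f by simp
qed

lemma Lidem: "e \<in> \<Lambda> \<Longrightarrow> e * e = e" using Lsub by (auto simp: idems_def)

lemma le_conj_eq: assumes h: "h \<in> \<Lambda>" and k: "k \<in> idems" and le: "idem_le h k"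
  and t: "t \<in> units" and kt: "k = t * h * uinv t"
  shows "k = h"
proof -
  have hI: "h \<in> idems" using h Lsub by auto
  obtain w f1 f2 where w: "w \<in> units" "f1 \<in> \<Lambda>" "f2 \<in> \<Lambda>" "unit_conj w f1 h" "unit_conj w f2 k"
    using ECS4[OF hI k le] by blast
  have "f1 = h" using Luniq[OF w(2) h w(1) w(4)] .
  have wk: "w * f2 * uinv w = k" using w conj_uinv by blast
  have "uinv t * w * f2 * uinv (uinv t * w) = uinv t * (w * f2 * uinv w) * t"
    using uinv_mult[OF uinv_units[OF t] w(1)] uinv_uinv[OF t] by (simp add: mult.assoc)
  also have "\<dots> = h" using wk kt uinv[OF t] by (simp add: mult.assoc uinv_left[OF t])
  finally have "unit_conj (uinv t * w) f2 h"
    using conj_uinv units_mult[OF uinv_units[OF t] w(1)] by blast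
  hence "f2 = h" using Luniq[OF w(3) h units_mult[OF uinv_units[OF t] w(1)]] by blast
  thus ?thesis using wk w(4) \<open>f1 = h\<close> conj_uinv w(1) by metis
qed

lemma Wc_units: "(x::'a) \<in> W_cent e \<Longrightarrow> x \<in> units" by (simp add: W_cent_def)

lemma Wc_mult: "(x::'a) \<in> W_cent e \<Longrightarrow> y \<in> W_cent e \<Longrightarrow> x * y \<in> W_cent e"
  unfolding W_cent_def using units_mult by auto (metis mult.assoc)

lemma Wc_uinv: "(x::'a) \<in> W_cent e \<Longrightarrow> uinv x \<in> W_cent e"
proof -
  assume x: "x \<in> W_cent e"
  hence xu: "x \<in> units" and c: "x * e = e * x" by (auto simp: W_cent_def)
  have "uinv x * e = uinv x * (e * x) * uinv x" using uinv[OF xu] by (metis mult.assoc mult_1_right)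
  also have "\<dots> = uinv x * (x * e) * uinv x" using c by simp
  also have "\<dots> = e * uinv x" using uinv[OF xu] by (metis mult.assoc mult_1_left)
  finally show ?thesis using uinv_units[OF xu] by (simp add: W_cent_def)
qed

lemma conj_Wc: "(g::'a) \<in> units \<Longrightarrow> g * e * uinv g = e \<Longrightarrow> g \<in> W_cent e"
proof -
  assume g: "g \<in> units" and c: "g * e * uinv g = e"
  have "e * g = g * e * (uinv g * g)" using c by (simp add: mult.assoc[symmetric])
  thus ?thesis using g uinv(2)[OF g] by (simp add: W_cent_def)
qed


lemma Wc_comm: "(x::'a) \<in> W_cent e \<Longrightarrow> x * e = e * x" by (simp add: W_cent_def)

lemma Wc_conj: "(x::'a) \<in> W_cent e \<Longrightarrow> uinv x * e * x = e"
proof -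
  assume x: "x \<in> W_cent e"
  have "uinv x * e * x = uinv x * (x * e)" using Wc_comm[OF x] by (simp add: mult.assoc)
  thus ?thesis using uinv_left[OF Wc_units[OF x]] by simp
qed

lemma parab_word: "e \<in> \<Lambda> \<Longrightarrow> x \<in> W_cent e \<Longrightarrow> \<exists>I\<subseteq>S. W_cent e = parabolic I \<and> (\<exists>u\<in>lists I. prod_list u = x)"
proof -
  assume "e \<in> \<Lambda>" "x \<in> W_cent e"
  moreover obtain I where "I \<subseteq> S" "W_cent e = parabolic I" using ECS5 \<open>e \<in> \<Lambda>\<close> by blast
  ultimately show ?thesis unfolding parabolic_def by auto
qed

lemma core: assumes g: "g \<in> \<Lambda>" and f: "f \<in> \<Lambda>" and a: "a \<in> units"
  shows "\<exists>U h V. U \<in> units \<and> V \<in> units \<and> h \<in> \<Lambda> \<and> g * a * f = U * h * V \<and>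
           cox_len S U + cox_len S V \<le> cox_len S a"
proof -
  have gI: "g \<in> idems" and fI: "f \<in> idems" using g f Lsub by auto
  have ai: "uinv a \<in> units" using uinv_units[OF a] .
  have gg: "g * g = g" and ff: "f * f = f" using gI fI by (auto simp: idems_def)
  define ga where "ga = uinv a * g * a"
  have gaI: "ga \<in> idems" using conj_idem[OF ai gI] uinv_uinv[OF a] by (simp add: ga_def)
  define k where "k = ga * f"
  have kI: "k \<in> idems" using idem_mult[OF gaI fI] by (simp add: k_def)
  have kf: "idem_le k f"
  proof -
    have "k * f = k" by (simp add: k_def mult.assoc ff)
    moreover have "f * k = k" using idem_comm[OF fI gaI] by (simp add: k_def mult.assoc[symmetric] ff)
      (simp add: mult.assoc ff)
    ultimately show ?thesis by (simp add: idem_le_def)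
  qed
  obtain w f1 f2 where w: "w \<in> units" "f1 \<in> \<Lambda>" "f2 \<in> \<Lambda>" "idem_le f1 f2" "unit_conj w f1 k" "unit_conj w f2 f"
    using ECS4[OF kI fI kf] by blast
  have "f2 = f" using Luniq[OF w(3) f w(1) w(6)] .
  hence wWf: "w \<in> W_cent f" using conj_Wc[OF w(1)] w(6) conj_uinv[OF w(1)] by blast
  have kw: "k = w * f1 * uinv w" using w(5) conj_uinv[OF w(1)] by simp
  define af where "af = a * f * uinv a"
  have afI: "af \<in> idems" using conj_idem[OF a fI] by (simp add: af_def)
  define k2 where "k2 = g * af"
  have k2I: "k2 \<in> idems" using idem_mult[OF gI afI] by (simp add: k2_def)
  have k2g: "idem_le k2 g"
  proof -
    have "g * k2 = k2" by (simp add: k2_def mult.assoc[symmetric] gg)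
    moreover have "k2 * g = k2" using idem_comm[OF gI afI] by (simp add: k2_def mult.assoc)
      (simp add: mult.assoc[symmetric] gg)
    ultimately show ?thesis by (simp add: idem_le_def)
  qed
  have k2k: "k2 = a * k * uinv a"
    by (simp add: k2_def af_def k_def ga_def mult.assoc uinv_right[OF a])
  obtain w2 p1 p2 where w2: "w2 \<in> units" "p1 \<in> \<Lambda>" "p2 \<in> \<Lambda>" "idem_le p1 p2" "unit_conj w2 p1 k2" "unit_conj w2 p2 g"
    using ECS4[OF k2I gI k2g] by blast
  have "p2 = g" using Luniq[OF w2(3) g w2(1) w2(6)] .
  hence w2Wg: "w2 \<in> W_cent g" using conj_Wc[OF w2(1)] w2(6) conj_uinv[OF w2(1)] by blast
  have k2w: "k2 = w2 * p1 * uinv w2" using w2(5) conj_uinv[OF w2(1)] by simp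
  define x where "x = uinv w2 * a * w"
  have xu: "x \<in> units" using units_mult[OF units_mult[OF uinv_units[OF w2(1)] a] w(1)] by (simp add: x_def)
  have uix: "uinv x = uinv w * uinv a * w2"
    using uinv_mult[OF units_mult[OF uinv_units[OF w2(1)] a] w(1)]
      uinv_mult[OF uinv_units[OF w2(1)] a] uinv_uinv[OF w2(1)] by (simp add: x_def mult.assoc)
  have "x * f1 * uinv x = uinv w2 * (a * (w * f1 * uinv w) * uinv a) * w2"
    unfolding uix by (simp add: x_def mult.assoc)
  also have "\<dots> = uinv w2 * k2 * w2" using kw k2k by simp
  also have "\<dots> = p1" using k2w by (simp add: mult.assoc uinv_left[OF w2(1)] uinv[OF w2(1)])
  finally have xc: "x * f1 * uinv x = p1" .
  have "f1 = p1" using Luniq[OF w(2) w2(2) xu] xc conj_uinv[OF xu] by blast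
  define h where "h = f1"
  have hL: "h \<in> \<Lambda>" using w(2) by (simp add: h_def)
  have hI: "h \<in> idems" using hL Lsub by auto
  have hh: "h * h = h" using hI by (simp add: idems_def)
  have xWh: "x \<in> W_cent h" using conj_Wc[OF xu] xc \<open>f1 = p1\<close> by (simp add: h_def)
  have hf: "h * f = h" using w(4) \<open>f2 = f\<close> by (simp add: idem_le_def h_def)
  have hg: "h * g = h" using w2(4) \<open>p2 = g\<close> \<open>f1 = p1\<close> by (simp add: idem_le_def h_def)
  have a_dec: "a = w2 * x * uinv w"
    by (simp add: x_def mult.assoc uinv_right[OF w2(1)] uinv[OF w(1)])
  have wi: "uinv w \<in> W_cent f" using Wc_uinv[OF wWf] .
  obtain Ig u where Ig: "Ig \<subseteq> S" "W_cent g = parabolic Ig" "u \<in> lists Ig" "prod_list u = w2"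
    using parab_word[OF g w2Wg] by blast
  obtain Ih \<xi> where Ih: "Ih \<subseteq> S" "W_cent h = parabolic Ih" "\<xi> \<in> lists Ih" "prod_list \<xi> = x"
    using parab_word[OF hL xWh] by blast
  obtain If v where If: "If \<subseteq> S" "W_cent f = parabolic If" "v \<in> lists If" "prod_list v = uinv w"
    using parab_word[OF f wi] by blast
  have lS: "u @ \<xi> @ v \<in> lists S" using Ig Ih If by auto
  have pa: "prod_list (u @ \<xi> @ v) = a" using Ig Ih If a_dec by (simp add: mult.assoc)
  obtain \<omega> where om: "subseq \<omega> (u @ \<xi> @ v)" "prod_list \<omega> = a" "length \<omega> = cox_len S a"
    using red_subseq[OF lS] pa by auto
  from om(1) obtain u' r1 where s1: "\<omega> = u' @ r1" "subseq u' u" "subseq r1 (\<xi> @ v)"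
    by (auto elim: subseq_appendE)
  from s1(3) obtain \<xi>' v' where s2: "r1 = \<xi>' @ v'" "subseq \<xi>' \<xi>" "subseq v' v"
    by (auto elim: subseq_appendE)
  have u'I: "u' \<in> lists Ig" using s1 Ig by (auto dest: list_emb_set)
  have x'I: "\<xi>' \<in> lists Ih" using s2 Ih by (auto dest: list_emb_set)
  have v'I: "v' \<in> lists If" using s2 If by (auto dest: list_emb_set)
  define U where "U = prod_list u'"
  define X where "X = prod_list \<xi>'"
  define V where "V = prod_list v'"
  have UW: "U \<in> W_cent g" using parabolic_prod[OF u'I] Ig by (simp add: U_def)
  have XW: "X \<in> W_cent h" using parabolic_prod[OF x'I] Ih by (simp add: X_def)
  have VW: "V \<in> W_cent f" using parabolic_prod[OF v'I] If by (simp add: V_def)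
  have Uu: "U \<in> units" and Xu: "X \<in> units" and Vu: "V \<in> units" using UW XW VW Wc_units by auto
  have aUXV: "a = U * X * V" using om s1 s2 by (simp add: U_def X_def V_def mult.assoc)
  have uia: "uinv a = uinv V * uinv X * uinv U"
    using uinv_mult[OF units_mult[OF Uu Xu] Vu] uinv_mult[OF Uu Xu] aUXV by (simp add: mult.assoc)
  define mm where "mm = uinv X * g * X * f"
  have mmI: "mm \<in> idems" using idem_mult[OF conj_idem[OF uinv_units[OF Xu] gI] fI] uinv_uinv[OF Xu]
    by (simp add: mm_def)
  have gU: "uinv U * g * U = g" using Wc_conj[OF UW] .
  have Vf: "V * f = f * V" using Wc_comm[OF VW] .
  have "k = uinv V * uinv X * (uinv U * g * U) * X * (V * f)"
    unfolding k_def ga_def uia by (simp add: aUXV mult.assoc)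
  also have "\<dots> = uinv V * mm * V" using gU Vf by (simp add: mm_def mult.assoc)
  finally have kmm: "k = uinv V * mm * V" .
  have mmk: "mm = (V * w) * h * uinv (V * w)"
  proof -
    have "mm = V * k * uinv V" using kmm by (simp add: mult.assoc uinv_right[OF Vu] uinv[OF Vu])
    also have "\<dots> = (V * w) * h * uinv (V * w)" using kw uinv_mult[OF Vu w(1)]
      by (simp add: mult.assoc h_def)
    finally show ?thesis .
  qed
  have Xh: "X * h = h * X" using Wc_comm[OF XW] .
  have Xih: "uinv X * h = h * uinv X" using Wc_comm[OF Wc_uinv[OF XW]] .
  have hmm: "h * mm = h"
  proof -
    have "h * mm = uinv X * (h * g) * X * f" using Xih by (simp add: mm_def mult.assoc[symmetric])
    also have "\<dots> = uinv X * (X * h) * f" using hg Xh by (simp add: mult.assoc)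
    also have "\<dots> = h" using hf by (simp add: mult.assoc uinv_left[OF Xu])
    finally show ?thesis .
  qed
  have "mm * h = h" using idem_comm[OF mmI hI] hmm by simp
  hence le: "idem_le h mm" using hmm by (simp add: idem_le_def)
  have mmh: "mm = h" using le_conj_eq[OF hL mmI le units_mult[OF Vu w(1)] mmk] .
  have "X * mm = g * X * f" by (simp add: mm_def mult.assoc uinv_right[OF Xu])
  hence gXf: "g * X * f = X * h" using mmh by simp
  have "g * a * f = (g * U) * X * (V * f)" by (simp add: aUXV mult.assoc)
  also have "\<dots> = (U * g) * X * (f * V)" using Wc_comm[OF UW] Vf by simp
  also have "\<dots> = U * (g * X * f) * V" by (simp add: mult.assoc)
  also have "\<dots> = (U * X) * h * V" using gXf by (simp add: mult.assoc)
  finally have eq: "g * a * f = (U * X) * h * V" .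
  have u'S: "u' \<in> lists S" using u'I Ig(1) by (meson lists_mono subsetD)
  have x'S: "\<xi>' \<in> lists S" using x'I Ih(1) by (meson lists_mono subsetD)
  have v'S: "v' \<in> lists S" using v'I If(1) by (meson lists_mono subsetD)
  have l1: "cox_len S (U * X) \<le> length (u' @ \<xi>')"
    using len_le[of "u' @ \<xi>'"] u'S x'S by (simp add: U_def X_def)
  have l2: "cox_len S V \<le> length v'" using len_le[OF v'S] by (simp add: V_def)
  have "cox_len S (U * X) + cox_len S V \<le> cox_len S a" using l1 l2 om s1 s2 by simp
  thus ?thesis using eq units_mult[OF Uu Xu] Vu hL by blast
qed


lemma word_dec: "\<omega> \<in> lists (S \<union> (\<Lambda> - {1})) \<Longrightarrow>
  \<exists>a f b. a \<in> units \<and> b \<in> units \<and> f \<in> \<Lambda> \<and> prod_list \<omega> = a * f * b \<and>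
    cox_len S a + cox_len S b \<le> length (filter (\<lambda>x. x \<in> S) \<omega>)"
proof (induct \<omega>)
  case Nil
  have "cox_len S 1 \<le> 0" using len_le[of "[]"] by simp
  thus ?case using one_L by (intro exI[of _ 1]) auto
next
  case (Cons c \<omega>)
  from Cons obtain a f b where ab: "a \<in> units" "b \<in> units" "f \<in> \<Lambda>" "prod_list \<omega> = a * f * b"
    "cox_len S a + cox_len S b \<le> length (filter (\<lambda>x. x \<in> S) \<omega>)" by auto
  show ?case
  proof (cases "c \<in> S")
    case True
    have cu: "c \<in> units" using True S_units by auto
    have "cox_len S c \<le> 1" using len_le[of "[c]"] True by simp
    hence "cox_len S (c * a) \<le> 1 + cox_len S a" using subadd[OF cu ab(1)] by simp
    hence "cox_len S (c * a) + cox_len S b \<le> length (filter (\<lambda>x. x \<in> S) (c # \<omega>))"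
      using ab True by simp
    moreover have "prod_list (c # \<omega>) = (c * a) * f * b" using ab by (simp add: mult.assoc)
    ultimately show ?thesis using units_mult[OF cu ab(1)] ab by blast
  next
    case False
    hence cL: "c \<in> \<Lambda>" using Cons.prems by auto
    obtain U h V where c: "U \<in> units" "V \<in> units" "h \<in> \<Lambda>" "c * a * f = U * h * V"
      "cox_len S U + cox_len S V \<le> cox_len S a" using core[OF cL ab(3) ab(1)] by blast
    have "prod_list (c # \<omega>) = U * h * (V * b)" using ab c by (simp add: mult.assoc[symmetric])
    moreover have "cox_len S U + cox_len S (V * b) \<le> length (filter (\<lambda>x. x \<in> S) (c # \<omega>))"
      using subadd[OF c(2) ab(2)] c(5) ab(5) False by simp
    ultimately show ?thesis using c units_mult[OF c(2) ab(2)] by blast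
  qed
qed

lemma lower: assumes nd: "normal_decomp \<Lambda> S r w1 e w2" and a: "a \<in> units" and b: "b \<in> units"
  and f: "f \<in> \<Lambda>" and r: "r = a * f * b"
  shows "cox_len S w1 + cox_len S w2 \<le> cox_len S a + cox_len S b"
proof -
  have eL: "e \<in> \<Lambda>" and w1: "w1 \<in> units" and w2: "w2 \<in> units" and rr: "r = w1 * e * w2"
    and m1: "\<forall>u\<in>W_star e. cox_len S w1 \<le> cox_len S (w1 * u)"
    and m2: "\<forall>u\<in>W_cent e. cox_len S w2 \<le> cox_len S (u * w2)"
    using nd by (auto simp: normal_decomp_def)
  have eI: "e \<in> idems" and fI: "f \<in> idems" using eL f Lsub by auto
  have ee: "e * e = e" using eI by (simp add: idems_def)
  define g where "g = uinv w1 * a"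
  define hh where "hh = b * uinv w2"
  have gu: "g \<in> units" using units_mult[OF uinv_units[OF w1] a] by (simp add: g_def)
  have hu: "hh \<in> units" using units_mult[OF b uinv_units[OF w2]] by (simp add: hh_def)
  have "g * f * hh = uinv w1 * (a * f * b) * uinv w2" by (simp add: g_def hh_def mult.assoc)
  also have "\<dots> = uinv w1 * (w1 * e * w2) * uinv w2" using r rr by simp
  also have "\<dots> = e" by (simp add: mult.assoc uinv_left[OF w1] uinv_right[OF w2] uinv[OF w2])
  finally have gfh: "g * f * hh = e" .
  define f' where "f' = g * f * uinv g"
  define q where "q = g * hh"
  have qu: "q \<in> units" using units_mult[OF gu hu] by (simp add: q_def)
  have f'I: "f' \<in> idems" using conj_idem[OF gu fI] by (simp add: f'_def)
  have ff': "f' * f' = f'" using f'I by (simp add: idems_def)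
  have e_fq: "e = f' * q" using gfh by (simp add: f'_def q_def mult.assoc uinv_left[OF gu])
  have "f' * e = e" using e_fq ff' by (simp add: mult.assoc[symmetric])
  hence ef': "e * f' = e" using idem_comm[OF eI f'I] by simp
  have f'eq: "f' = e * uinv q" using e_fq by (simp add: mult.assoc uinv[OF qu])
  have "e * f' = f'" using f'eq ee by (simp add: mult.assoc[symmetric])
  hence f'e: "f' = e" using ef' by simp
  have "unit_conj g f e" using f'e conj_uinv[OF gu] by (simp add: f'_def)
  hence fe: "f = e" using Luniq[OF f eL gu] by blast
  have eq: "e * q = e" using e_fq f'e by simp
  have qeI: "q * e \<in> idems"
  proof -
    have "q * e * (q * e) = q * (e * q) * e" by (simp add: mult.assoc)
    thus ?thesis using eq ee by (simp add: idems_def mult.assoc)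
  qed
  have "e * (q * e) = e" using eq ee by (simp add: mult.assoc[symmetric])
  moreover have "(q * e) * e = q * e" using ee by (simp add: mult.assoc)
  ultimately have qe: "q * e = e" using idem_comm[OF eI qeI] by simp
  have qWs: "q \<in> W_star e" using qu qe eq by (simp add: W_star_def)
  have qWc: "q \<in> W_cent e" using qu qe eq by (simp add: W_cent_def)
  have gWc: "g \<in> W_cent e" using conj_Wc[OF gu] f'e fe by (simp add: f'_def)
  define y where "y = uinv g * q"
  have yW: "y \<in> W_cent e" using Wc_mult[OF Wc_uinv[OF gWc] qWc] by (simp add: y_def)
  have yu: "y \<in> units" using yW Wc_units by auto
  have bY: "b = y * w2" by (simp add: y_def q_def hh_def mult.assoc uinv_left[OF gu] uinv[OF w2])
  have aY: "a * y = w1 * q"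
  proof -
    have "a = w1 * g" by (simp add: g_def uinv_right[OF w1])
    thus ?thesis by (simp add: y_def mult.assoc uinv_right[OF gu])
  qed
  have "cox_len S w1 \<le> cox_len S (a * y)" using m1 qWs aY by simp
  also have "\<dots> \<le> cox_len S a + cox_len S y" by (rule subadd[OF a yu])
  finally have l1: "cox_len S w1 \<le> cox_len S a + cox_len S y" .
  obtain I where I: "I \<subseteq> S" "W_cent e = parabolic I" using ECS5[OF eL] by blast
  have "cox_len S y + cox_len S w2 \<le> cox_len S (y * w2)"
    by (rule coset_add[OF I(1)]) (use yW I m2 w2 in auto)
  thus ?thesis using l1 bY by simp
qed

abbreviation "cnt \<omega> \<equiv> length (filter (\<lambda>x. x \<in> S) \<omega>)"

lemma rlen_le: "\<omega> \<in> lists (S \<union> (\<Lambda> - {1})) \<Longrightarrow> prod_list \<omega> = x \<Longrightarrow> rlen \<Lambda> S x \<le> cnt \<omega>"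
  unfolding rlen_def by (rule Least_le) blast

lemma rlen_ex: "\<omega> \<in> lists (S \<union> (\<Lambda> - {1})) \<Longrightarrow> prod_list \<omega> = x \<Longrightarrow>
   \<exists>\<omega>'\<in>lists (S \<union> (\<Lambda> - {1})). prod_list \<omega>' = x \<and> cnt \<omega>' = rlen \<Lambda> S x"
proof -
  assume "\<omega> \<in> lists (S \<union> (\<Lambda> - {1}))" "prod_list \<omega> = x"
  hence "\<exists>n. \<exists>u\<in>lists (S \<union> (\<Lambda> - {1})). prod_list u = x \<and> cnt u = n" by blast
  from LeastI_ex[OF this] show ?thesis unfolding rlen_def by blast
qed

lemma rlen_unit: assumes w: "w \<in> units" shows "rlen \<Lambda> S w = cox_len S w"
proof -
  obtain \<sigma> where s: "\<sigma> \<in> lists S" "prod_list \<sigma> = w" "length \<sigma> = cox_len S w" using red_word[OF w] by blast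
  have sA: "\<sigma> \<in> lists (S \<union> (\<Lambda> - {1}))" using s by auto
  have fs: "filter (\<lambda>x. x \<in> S) \<sigma> = \<sigma>" using s(1) by (auto simp: filter_id_conv)
  have le: "rlen \<Lambda> S w \<le> cox_len S w" using rlen_le[OF sA s(2)] fs s by simp
  obtain \<omega> where o: "\<omega> \<in> lists (S \<union> (\<Lambda> - {1}))" "prod_list \<omega> = w" "cnt \<omega> = rlen \<Lambda> S w"
    using rlen_ex[OF sA s(2)] by blast
  obtain a f b where d: "a \<in> units" "b \<in> units" "f \<in> \<Lambda>" "prod_list \<omega> = a * f * b"
    "cox_len S a + cox_len S b \<le> cnt \<omega>" using word_dec[OF o(1)] by blast
  have "f = uinv a * w * uinv b" using d o by (simp add: mult.assoc uinv_left[OF d(1)] uinv[OF d(2)])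
  hence "f \<in> units" using units_mult[OF units_mult[OF uinv_units[OF d(1)] w] uinv_units[OF d(2)]] by simp
  hence "f = 1" using unit_idem d(3) Lsub by auto
  hence "w = a * b" using d o by simp
  hence "cox_len S w \<le> rlen \<Lambda> S w" using subadd[OF d(1) d(2)] d(5) o(3) by simp
  thus ?thesis using le by simp
qed

lemma main: assumes nd: "normal_decomp \<Lambda> S r w1 e w2"
  shows "rlen \<Lambda> S r = rlen \<Lambda> S w1 + rlen \<Lambda> S w2"
proof -
  have eL: "e \<in> \<Lambda>" and w1: "w1 \<in> units" and w2: "w2 \<in> units" and rr: "r = w1 * e * w2"
    using nd by (auto simp: normal_decomp_def)
  have ee: "e * e = e" using Lidem[OF eL] .
  obtain \<sigma>1 where s1: "\<sigma>1 \<in> lists S" "prod_list \<sigma>1 = w1" "length \<sigma>1 = cox_len S w1" using red_word[OF w1] by blast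
  obtain \<sigma>2 where s2: "\<sigma>2 \<in> lists S" "prod_list \<sigma>2 = w2" "length \<sigma>2 = cox_len S w2" using red_word[OF w2] by blast
  define mid where "mid = (if e = 1 then [] else [e])"
  have eS: "e \<noteq> 1 \<Longrightarrow> e \<notin> S" using S_inv ee by force
  have midA: "mid \<in> lists (S \<union> (\<Lambda> - {1}))" using eL by (auto simp: mid_def)
  have midc: "cnt mid = 0" using eS by (auto simp: mid_def)
  have midp: "prod_list mid = e" by (simp add: mid_def)
  have fs1: "filter (\<lambda>x. x \<in> S) \<sigma>1 = \<sigma>1" using s1(1) by (auto simp: filter_id_conv)
  have fs2: "filter (\<lambda>x. x \<in> S) \<sigma>2 = \<sigma>2" using s2(1) by (auto simp: filter_id_conv)
  have wA: "\<sigma>1 @ mid @ \<sigma>2 \<in> lists (S \<union> (\<Lambda> - {1}))" using s1 s2 midA by auto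
  have wp: "prod_list (\<sigma>1 @ mid @ \<sigma>2) = r" using s1 s2 midp rr by (simp add: mult.assoc)
  have up: "rlen \<Lambda> S r \<le> cox_len S w1 + cox_len S w2"
    using rlen_le[OF wA wp] fs1 fs2 midc s1 s2 by simp
  obtain \<omega> where o: "\<omega> \<in> lists (S \<union> (\<Lambda> - {1}))" "prod_list \<omega> = r" "cnt \<omega> = rlen \<Lambda> S r"
    using rlen_ex[OF wA wp] by blast
  obtain a f b where d: "a \<in> units" "b \<in> units" "f \<in> \<Lambda>" "prod_list \<omega> = a * f * b"
    "cox_len S a + cox_len S b \<le> cnt \<omega>" using word_dec[OF o(1)] by blast
  have "cox_len S w1 + cox_len S w2 \<le> rlen \<Lambda> S r"
    using lower[OF nd d(1) d(2) d(3)] d o by simp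
  thus ?thesis using up rlen_unit[OF w1] rlen_unit[OF w2] by simp
qed

end

theorem mainTheorem12:
  fixes \<Lambda> S :: "'a::monoid_mult set" and r w1 e w2 :: 'a
  assumes "gen_renner_coxeter \<Lambda> S"
    and "normal_decomp \<Lambda> S r w1 e w2"
  shows "rlen \<Lambda> S r = rlen \<Lambda> S w1 + rlen \<Lambda> S w2"
proof -
  have A: "factorisable TYPE('a)" "\<Lambda> \<subseteq> idems"
     "\<forall>e\<in>idems. \<exists>f\<in>\<Lambda>. \<exists>g\<in>units. unit_conj g f e"
     "\<forall>f1\<in>\<Lambda>. \<forall>f2\<in>\<Lambda>. (\<exists>g\<in>units. unit_conj g f1 f2) \<longrightarrow> f1 = f2"
     "\<forall>a\<in>\<Lambda>. \<forall>b\<in>\<Lambda>. a * b \<in> \<Lambda>" "coxeter_system S"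
     "\<forall>e1\<in>idems. \<forall>e2\<in>idems. idem_le e1 e2 \<longrightarrow>
        (\<exists>w\<in>units. \<exists>f1\<in>\<Lambda>. \<exists>f2\<in>\<Lambda>. idem_le f1 f2 \<and> unit_conj w f1 e1 \<and> unit_conj w f2 e2)"
     "\<forall>e\<in>\<Lambda>. (\<exists>I\<subseteq>S. W_cent e = parabolic I) \<and> (\<exists>J\<subseteq>S. W_star e = parabolic J)"
    using assms(1) unfolding gen_renner_coxeter_def by simp_all
  from A(6) obtain m :: "'a \<Rightarrow> 'a \<Rightarrow> nat" where C: "S \<subseteq> units" "\<forall>s\<in>S. s \<noteq> 1 \<and> s * s = 1"
    "\<forall>g\<in>units. \<exists>u\<in>lists S. prod_list u = g"
    "\<forall>u\<in>lists S. \<forall>v\<in>lists S. prod_list u = prod_list v \<longleftrightarrow> cox_equiv S m u v"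
    unfolding coxeter_system_def by auto
  have comm: "\<forall>e\<in>(idems::'a set). \<forall>f\<in>idems. e * f = f * e" using A(1) unfolding factorisable_def by simp
  interpret grc \<Lambda> S m
  proof
    show "S \<subseteq> units" using C(1) .
    show "\<And>s. s \<in> S \<Longrightarrow> s * s = 1" using C(2) by blast
    show "\<And>g. g \<in> units \<Longrightarrow> \<exists>u\<in>lists S. prod_list u = g" using C(3) by blast
    show "\<And>u v. u \<in> lists S \<Longrightarrow> v \<in> lists S \<Longrightarrow> prod_list u = prod_list v \<longleftrightarrow> cox_equiv S m u v"
      using C(4) by blast
    show "\<And>(e::'a) f. e \<in> idems \<Longrightarrow> f \<in> idems \<Longrightarrow> e * f = f * e" using comm by blast
    show "\<Lambda> \<subseteq> idems" using A(2) .
    show "\<And>e. e \<in> idems \<Longrightarrow> \<exists>f\<in>\<Lambda>. \<exists>g\<in>units. unit_conj g f e" using A(3) by blast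
    show "\<And>f1 f2 g. f1 \<in> \<Lambda> \<Longrightarrow> f2 \<in> \<Lambda> \<Longrightarrow> g \<in> units \<Longrightarrow> unit_conj g f1 f2 \<Longrightarrow> f1 = f2"
      using A(4) by blast
    show "\<And>a b. a \<in> \<Lambda> \<Longrightarrow> b \<in> \<Lambda> \<Longrightarrow> a * b \<in> \<Lambda>" using A(5) by blast
    show "\<And>e1 e2. e1 \<in> idems \<Longrightarrow> e2 \<in> idems \<Longrightarrow> idem_le e1 e2 \<Longrightarrow>
        (\<exists>w\<in>units. \<exists>f1\<in>\<Lambda>. \<exists>f2\<in>\<Lambda>. idem_le f1 f2 \<and> unit_conj w f1 e1 \<and> unit_conj w f2 e2)"
      using A(7) by blast
    show "\<And>e. e \<in> \<Lambda> \<Longrightarrow> (\<exists>I\<subseteq>S. W_cent e = parabolic I)" using A(8) by blast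
  qed
  show ?thesis using main[OF assms(2)] .
qed

end
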